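(* Let $\nu$ be a Lévy measure on $\mathbb R$, let $\beta>0$, let $f\in l^\infty(\mathrm{supp}(\nu))\cap l^1(\mathrm{supp}(\nu))$ and let $k$ be a function on $\mathrm{supp}(\nu)$ which is bounded from above. Then the equation $$\varphi(x)=\exp\Big\{k(x)-\beta f(x)\int f(z)\varphi(z)\,\nu(dz)\Big\},\qquad x\in\mathrm{supp}(\nu),$$ defines a function $\varphi:\mathrm{supp}(\nu)\to\mathbb R$ in a well-defined (unique) way, and this $\varphi$ is bounded.
   Context: $l^\infty(\mathrm{supp}(\nu))\cap l^1(\mathrm{supp}(\nu))$ denotes the set of bounded, $\nu$-integrable real functions on the support of $\nu$. *)

theory Defs
  imports "HOL-Analysis.Analysis"
begin

definition msupp :: "real measure \<Rightarrow> real set" where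
  "msupp \<nu> = {x. \<forall>e>0. emeasure \<nu> (ball x e) > 0}"

definition levy_measure :: "real measure \<Rightarrow> bool" where
  "levy_measure \<nu> \<longleftrightarrow> sets \<nu> = sets borel \<and> emeasure \<nu> {0} = 0 \<and>
     (\<integral>\<^sup>+ x. ennreal (min 1 (x\<^sup>2)) \<partial>\<nu>) < \<infinity>"

end

theory Submission
  imports Defs
begin

theorem lemma3p3:
  fixes \<nu> :: "real measure" and \<beta> :: real and f k :: "real \<Rightarrow> real"
  assumes "levy_measure \<nu>"
    and "\<beta> > 0"
    and "bounded (f ` msupp \<nu>)"
    and "set_integrable \<nu> (msupp \<nu>) f"
    and "set_borel_measurable \<nu> (msupp \<nu>) k"
    and "bdd_above (k ` msupp \<nu>)"
  shows "\<exists>\<phi>. set_integrable \<nu> (msupp \<nu>) (\<lambda>z. f z * \<phi> z)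
            \<and> (\<forall>x\<in>msupp \<nu>. \<phi> x = exp (k x - \<beta> * f x * (\<integral>z\<in>msupp \<nu>. f z * \<phi> z \<partial>\<nu>)))
            \<and> bounded (\<phi> ` msupp \<nu>)
            \<and> (\<forall>\<psi>. set_integrable \<nu> (msupp \<nu>) (\<lambda>z. f z * \<psi> z)
                   \<and> (\<forall>x\<in>msupp \<nu>. \<psi> x = exp (k x - \<beta> * f x * (\<integral>z\<in>msupp \<nu>. f z * \<psi> z \<partial>\<nu>)))
                   \<longrightarrow> (\<forall>x\<in>msupp \<nu>. \<psi> x = \<phi> x))"
proof -
  define S where "S = msupp \<nu>"
  define F where "F = (\<lambda>z. indicator S z * f z)"
  define Kk where "Kk = (\<lambda>z. indicator S z * k z)"
  have Fi: "integrable \<nu> F" using assms(4) unfolding F_def S_def set_integrable_def by simp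
  have Fm[measurable]: "F \<in> borel_measurable \<nu>" using Fi by auto
  have Km[measurable]: "Kk \<in> borel_measurable \<nu>" using assms(5) unfolding Kk_def S_def set_borel_measurable_def by simp
  obtain B where B: "\<And>x. x \<in> S \<Longrightarrow> \<bar>f x\<bar> \<le> B" using assms(3) unfolding S_def bounded_real by auto
  obtain K where K: "\<And>x. x \<in> S \<Longrightarrow> k x \<le> K" using assms(6) unfolding S_def bdd_above_def by auto
  define e where "e = (\<lambda>c z. F z * exp (Kk z - \<beta> * F z * c))"
  have e_alt: "e c z = indicator S z * (f z * exp (k z - \<beta> * f z * c))" for c z
    unfolding e_def F_def Kk_def by (auto simp: indicator_def)
  have em[measurable]: "e c \<in> borel_measurable \<nu>" for c unfolding e_def by measurable
  have ebound: "\<bar>e c z\<bar> \<le> \<bar>F z\<bar> * exp (K + \<beta> * B * R)" if "\<bar>c\<bar> \<le> R" for c z R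
  proof (cases "z \<in> S")
    case True
    have "\<bar>\<beta> * f z * c\<bar> \<le> \<beta> * B * R"
      using B[OF True] that assms(2) by (simp add: abs_mult mult_mono)
    then have "k z - \<beta> * f z * c \<le> K + \<beta> * B * R" using K[OF True] by linarith
    then have "exp (k z - \<beta> * f z * c) \<le> exp (K + \<beta> * B * R)" by simp
    then show ?thesis using True unfolding e_alt F_def by (simp add: abs_mult mult_left_mono)
  next
    case False
    then show ?thesis unfolding e_alt F_def by simp
  qed
  have ei: "integrable \<nu> (e c)" for c
  proof (rule Bochner_Integration.integrable_bound[OF _ em])
    show "integrable \<nu> (\<lambda>z. F z * exp (K + \<beta> * B * \<bar>c\<bar>))" using Fi by simp
    show "AE x in \<nu>. norm (e c x) \<le> norm (F x * exp (K + \<beta> * B * \<bar>c\<bar>))"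
      using ebound[of c "\<bar>c\<bar>"] by (simp add: abs_mult)
  qed
  define G where "G = (\<lambda>c. integral\<^sup>L \<nu> (e c))"
  have Gmono: "G c2 \<le> G c1" if "c1 \<le> c2" for c1 c2
    unfolding G_def
  proof (rule integral_mono[OF ei ei])
    fix z
    show "e c2 z \<le> e c1 z"
    proof (cases "F z \<ge> 0")
      case True
      have "\<beta> * F z * c1 \<le> \<beta> * F z * c2" using True that assms(2) by (simp add: mult_left_mono)
      then have "exp (Kk z - \<beta> * F z * c2) \<le> exp (Kk z - \<beta> * F z * c1)" by simp
      then show ?thesis unfolding e_def using True by (simp add: mult_left_mono)
    next
      case False
      have "\<beta> * F z * c2 \<le> \<beta> * F z * c1" using False that assms(2)
        by (simp add: mult_left_mono_neg mult_nonpos_nonneg)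
      then have "exp (Kk z - \<beta> * F z * c1) \<le> exp (Kk z - \<beta> * F z * c2)" by simp
      then show ?thesis unfolding e_def using False by (simp add: mult_left_mono_neg)
    qed
  qed
  have Gcont: "isCont G a" for a
    unfolding continuous_at_sequentially comp_def
  proof (intro allI impI)
    fix X assume X: "X \<longlonglongrightarrow> a"
    then obtain R where R: "\<And>n. \<bar>X n\<bar> \<le> R"
      using convergent_imp_Bseq[of X] X unfolding Bseq_def convergent_def by auto
    show "(\<lambda>n. G (X n)) \<longlonglongrightarrow> G a"
      unfolding G_def
    proof (rule integral_dominated_convergence[where w="\<lambda>z. \<bar>F z\<bar> * exp (K + \<beta> * B * R)"])
      show "integrable \<nu> (\<lambda>z. \<bar>F z\<bar> * exp (K + \<beta> * B * R))" using Fi by simp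
      show "AE x in \<nu>. (\<lambda>i. e (X i) x) \<longlonglongrightarrow> e a x"
        unfolding e_def by (intro AE_I2 tendsto_intros X)
      show "\<And>i. AE x in \<nu>. norm (e (X i) x) \<le> \<bar>F x\<bar> * exp (K + \<beta> * B * R)"
        using ebound R by simp
    qed auto
  qed
  have "\<exists>c. c - G c = 0"
  proof -
    define a where "a = - \<bar>G 0\<bar> - 1"
    define b where "b = \<bar>G 0\<bar> + 1"
    have "G 0 \<le> G a" using Gmono[of a 0] unfolding a_def by simp
    then have "a - G a \<le> 0" unfolding a_def by linarith
    moreover have "G b \<le> G 0" using Gmono[of 0 b] unfolding b_def by simp
    then have "0 \<le> b - G b" unfolding b_def by linarith
    moreover have "a \<le> b" unfolding a_def b_def by simp
    moreover have "\<forall>x. a \<le> x \<and> x \<le> b \<longrightarrow> isCont (\<lambda>c. c - G c) x"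
      using Gcont by (auto intro: continuous_intros)
    ultimately show ?thesis using IVT[of "\<lambda>c. c - G c" a 0 b] by blast
  qed
  then obtain c where c: "G c = c" by (metis eq_iff_diff_eq_0)
  have uniq: "c' = c" if "G c' = c'" for c'
    using Gmono[of c c'] Gmono[of c' c] c that by linarith
  define \<phi> where "\<phi> = (\<lambda>x. exp (k x - \<beta> * f x * c))"
  have eq\<phi>: "(\<lambda>z. indicator S z *\<^sub>R (f z * \<phi> z)) = e c" unfolding \<phi>_def by (auto simp: e_alt)
  have I\<phi>: "(\<integral>z\<in>S. f z * \<phi> z \<partial>\<nu>) = c"
    unfolding set_lebesgue_integral_def eq\<phi> using c G_def by simp
  show ?thesis unfolding S_def[symmetric]
  proof (intro exI[of _ \<phi>] conjI ballI allI impI)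
    show "set_integrable \<nu> S (\<lambda>z. f z * \<phi> z)" unfolding set_integrable_def eq\<phi> by (rule ei)
    show "\<phi> x = exp (k x - \<beta> * f x * (\<integral>z\<in>S. f z * \<phi> z \<partial>\<nu>))" for x
      unfolding I\<phi> by (simp add: \<phi>_def)
    show "bounded (\<phi> ` S)" unfolding bounded_real
    proof (intro exI ballI)
      fix y assume "y \<in> \<phi> ` S"
      then obtain x where x: "x \<in> S" "y = \<phi> x" by auto
      have "\<bar>\<beta> * f x * c\<bar> \<le> \<beta> * B * \<bar>c\<bar>"
        using B[OF x(1)] assms(2) by (simp add: abs_mult mult_mono)
      then have "k x - \<beta> * f x * c \<le> K + \<beta> * B * \<bar>c\<bar>" using K[OF x(1)] by linarith
      then show "\<bar>y\<bar> \<le> exp (K + \<beta> * B * \<bar>c\<bar>)" using x unfolding \<phi>_def by simp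
    qed
  next
    fix \<psi> x
    assume h: "set_integrable \<nu> S (\<lambda>z. f z * \<psi> z) \<and>
      (\<forall>x\<in>S. \<psi> x = exp (k x - \<beta> * f x * (\<integral>z\<in>S. f z * \<psi> z \<partial>\<nu>)))"
      and x: "x \<in> S"
    define c' where "c' = (\<integral>z\<in>S. f z * \<psi> z \<partial>\<nu>)"
    have eq\<psi>: "(\<lambda>z. indicator S z *\<^sub>R (f z * \<psi> z)) = e c'"
    proof
      fix z show "indicator S z *\<^sub>R (f z * \<psi> z) = e c' z"
        using h unfolding e_alt c'_def by (cases "z \<in> S") auto
    qed
    have "G c' = c'" unfolding G_def c'_def[of] set_lebesgue_integral_def
      by (metis c'_def eq\<psi> set_lebesgue_integral_def)
    then have "c' = c" by (rule uniq)
    then show "\<psi> x = \<phi> x" using h x unfolding \<phi>_def c'_def by simp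
  qed
qed

end
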